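(* Let $M$ be a smooth $n$-manifold with a torsion-free linear connection $\nabla$ and a symmetric $(0,2)$-tensor field $c$, and let $\overline\nabla$ be the Levi-Civita connection of the modified Riemannian extension $\overline g_{\nabla,c}$ on $T^{\ast}M$. Then the Schouten–Van Kampen connection $\overline\nabla^{\ast}$ associated to $\overline\nabla$ and adapted to the pair of distributions $(\mathcal H,\mathcal V)$ coincides with the horizontal lift ${}^H\nabla$ of $\nabla$ to $T^{\ast}M$.
   Context: Summation convention; $\overline{i}=n+i$. $\Gamma^h_{ij}$ are the coefficients of $\nabla$ in local coordinates $(x^i)$. On $T^{\ast}M$ use induced coordinates $(x^i,p_i)$, $\partial_{\overline i}=\partial/\partial p_i$, and the adapted frame $E_j=\partial_j+p_a\Gamma^a_{hj}\partial_{\overline h}$, $E_{\overline j}=\partial_{\overline j}$. The horizontal distribution $\mathcal H$ is spanned by the $E_j$ and the vertical distribution $\mathcal V$ by the $E_{\overline j}$; $H$ and $V$ denote the projections of $TT^{\ast}M=\mathcal H\oplus\mathcal V$ onto $\mathcal H$ and $\mathcal V$. The modified Riemannian extension is $\overline{g}_{\nabla,c}(E_i,E_j)=c_{ij}$, $\overline{g}_{\nabla,c}(E_i,E_{\overline j})=\overline{g}_{\nabla,c}(E_{\overline j},E_i)=\delta_i^j$, $\overline{g}_{\nabla,c}(E_{\overline i},E_{\overline j})=0$. The Schouten–Van Kampen connection is $\overline\nabla^{\ast}_XY=H(\overline\nabla_X HY)+V(\overline\nabla_X VY)$. The horizontal lift ${}^H\nabla$ is the linear connection on $T^{\ast}M$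 with ${}^H\nabla_{E_{\overline{i}}}E_{\overline{j}}=0$, ${}^H\nabla_{E_{\overline{i}}}E_{j}=0$, ${}^H\nabla_{E_{i}}E_{\overline{j}}=-\Gamma^{j}_{ih}E_{\overline{h}}$, ${}^H\nabla_{E_{i}}E_{j}=\Gamma^{h}_{ij}E_{h}$. *)

theory Defs
  imports "HOL-Analysis.Analysis"
begin

text \<open>M is an open coordinate domain U of real^'n,
  T*M is U x real^'n with coordinates (x,p). Vectors tangent to T*M are written in
  the coordinate basis (d_i, d_{bar i}) as pairs (a, b) :: real^'n x real^'n.
  Gam x h i j = Gamma^h_{ij}(x); c x i j = c_{ij}(x).\<close>

type_synonym ('n) cpt = "(real^'n) \<times> (real^'n)"

fun Ck_on :: "nat \<Rightarrow> 'a::euclidean_space set \<Rightarrow> ('a \<Rightarrow> 'b::euclidean_space) \<Rightarrow> bool" where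
  "Ck_on 0 W f = continuous_on W f"
| "Ck_on (Suc k) W f = (f differentiable_on W \<and>
      (\<forall>v. Ck_on k W (\<lambda>z. frechet_derivative f (at z) v)))"

definition smooth_on :: "'a::euclidean_space set \<Rightarrow> ('a \<Rightarrow> 'b::euclidean_space) \<Rightarrow> bool" where
  "smooth_on W f \<longleftrightarrow> (\<forall>k. Ck_on k W f)"

text \<open>Adapted frame: E_j = d_j + p_a Gamma^a_{hj} d_{bar h},  E_{bar j} = d_{bar j}.\<close>
definition Eh :: "(real^'n::finite \<Rightarrow> 'n \<Rightarrow> 'n \<Rightarrow> 'n \<Rightarrow> real) \<Rightarrow> 'n \<Rightarrow> 'n cpt \<Rightarrow> 'n cpt" where
  "Eh Gam j z = (axis j 1, (\<chi> h. \<Sum>a\<in>UNIV. snd z $ a * Gam (fst z) a h j))"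

definition Ev :: "'n::finite \<Rightarrow> 'n cpt \<Rightarrow> 'n cpt" where
  "Ev j z = (0, axis j 1)"

text \<open>Components of a tangent vector u at z with respect to the adapted frame:
  u = hcomp^j E_j + vcomp^h E_{bar h}.\<close>
definition hcomp :: "(real^'n::finite \<Rightarrow> 'n \<Rightarrow> 'n \<Rightarrow> 'n \<Rightarrow> real) \<Rightarrow> 'n cpt \<Rightarrow> 'n cpt \<Rightarrow> real^'n" where
  "hcomp Gam z u = fst u"

definition vcomp :: "(real^'n::finite \<Rightarrow> 'n \<Rightarrow> 'n \<Rightarrow> 'n \<Rightarrow> real) \<Rightarrow> 'n cpt \<Rightarrow> 'n cpt \<Rightarrow> real^'n" where
  "vcomp Gam z u = (\<chi> h. snd u $ h -
      (\<Sum>a\<in>UNIV. \<Sum>j\<in>UNIV. snd z $ a * Gam (fst z) a h j * fst u $ j))"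

definition Hproj :: "(real^'n::finite \<Rightarrow> 'n \<Rightarrow> 'n \<Rightarrow> 'n \<Rightarrow> real) \<Rightarrow> 'n cpt \<Rightarrow> 'n cpt \<Rightarrow> 'n cpt" where
  "Hproj Gam z u = (\<Sum>j\<in>UNIV. hcomp Gam z u $ j *\<^sub>R Eh Gam j z)"

definition Vproj :: "(real^'n::finite \<Rightarrow> 'n \<Rightarrow> 'n \<Rightarrow> 'n \<Rightarrow> real) \<Rightarrow> 'n cpt \<Rightarrow> 'n cpt \<Rightarrow> 'n cpt" where
  "Vproj Gam z u = (\<Sum>h\<in>UNIV. vcomp Gam z u $ h *\<^sub>R Ev h z)"

text \<open>Modified Riemannian extension: g(E_i,E_j)=c_ij, g(E_i,E_{bar j})=delta, g(E_{bar i},E_{bar j})=0.\<close>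
definition gbar :: "(real^'n::finite \<Rightarrow> 'n \<Rightarrow> 'n \<Rightarrow> 'n \<Rightarrow> real) \<Rightarrow> (real^'n \<Rightarrow> 'n \<Rightarrow> 'n \<Rightarrow> real)
    \<Rightarrow> 'n cpt \<Rightarrow> 'n cpt \<Rightarrow> 'n cpt \<Rightarrow> real" where
  "gbar Gam c z u v =
     (\<Sum>i\<in>UNIV. \<Sum>j\<in>UNIV. c (fst z) i j * hcomp Gam z u $ i * hcomp Gam z v $ j)
     + (\<Sum>i\<in>UNIV. hcomp Gam z u $ i * vcomp Gam z v $ i)
     + (\<Sum>i\<in>UNIV. vcomp Gam z u $ i * hcomp Gam z v $ i)"

text \<open>A linear connection on an open coordinate domain W, given by its
  Christoffel form Lam (bilinear at each point, smooth in the point):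
  nabla_X Y = dY(X) + Lam(X,Y).\<close>
definition conn :: "('a::euclidean_space \<Rightarrow> 'a \<Rightarrow> 'a \<Rightarrow> 'a) \<Rightarrow> ('a \<Rightarrow> 'a) \<Rightarrow> ('a \<Rightarrow> 'a) \<Rightarrow> 'a \<Rightarrow> 'a" where
  "conn Lam X Y z = frechet_derivative Y (at z) (X z) + Lam z (X z) (Y z)"

definition lin_conn :: "'a::euclidean_space set \<Rightarrow> ('a \<Rightarrow> 'a \<Rightarrow> 'a \<Rightarrow> 'a) \<Rightarrow> bool" where
  "lin_conn W Lam \<longleftrightarrow> (\<forall>z\<in>W. bilinear (Lam z)) \<and> (\<forall>u v. smooth_on W (\<lambda>z. Lam z u v))"

definition lie :: "('a::euclidean_space \<Rightarrow> 'a) \<Rightarrow> ('a \<Rightarrow> 'a) \<Rightarrow> 'a \<Rightarrow> 'a" where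
  "lie X Y z = frechet_derivative Y (at z) (X z) - frechet_derivative X (at z) (Y z)"

definition torsion_free_conn :: "'a::euclidean_space set \<Rightarrow> ('a \<Rightarrow> 'a \<Rightarrow> 'a \<Rightarrow> 'a) \<Rightarrow> bool" where
  "torsion_free_conn W Lam \<longleftrightarrow> (\<forall>X Y. smooth_on W X \<longrightarrow> smooth_on W Y \<longrightarrow>
     (\<forall>z\<in>W. conn Lam X Y z - conn Lam Y X z = lie X Y z))"

definition metric_conn :: "'a::euclidean_space set \<Rightarrow> ('a \<Rightarrow> 'a \<Rightarrow> 'a \<Rightarrow> real) \<Rightarrow> ('a \<Rightarrow> 'a \<Rightarrow> 'a \<Rightarrow> 'a) \<Rightarrow> bool" where
  "metric_conn W g Lam \<longleftrightarrow> (\<forall>X Y Z. smooth_on W X \<longrightarrow> smooth_on W Y \<longrightarrow> smooth_on W Z \<longrightarrow>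
     (\<forall>z\<in>W. frechet_derivative (\<lambda>w. g w (Y w) (Z w)) (at z) (X z)
            = g z (conn Lam X Y z) (Z z) + g z (Y z) (conn Lam X Z z)))"

definition levi_civita :: "'a::euclidean_space set \<Rightarrow> ('a \<Rightarrow> 'a \<Rightarrow> 'a \<Rightarrow> real) \<Rightarrow> ('a \<Rightarrow> 'a \<Rightarrow> 'a \<Rightarrow> 'a) \<Rightarrow> bool" where
  "levi_civita W g Lam \<longleftrightarrow> lin_conn W Lam \<and> torsion_free_conn W Lam \<and> metric_conn W g Lam"

definition svk :: "(real^'n::finite \<Rightarrow> 'n \<Rightarrow> 'n \<Rightarrow> 'n \<Rightarrow> real) \<Rightarrow> ('n cpt \<Rightarrow> 'n cpt \<Rightarrow> 'n cpt \<Rightarrow> 'n cpt)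
    \<Rightarrow> ('n cpt \<Rightarrow> 'n cpt) \<Rightarrow> ('n cpt \<Rightarrow> 'n cpt) \<Rightarrow> 'n cpt \<Rightarrow> 'n cpt" where
  "svk Gam Lam X Y z =
     Hproj Gam z (conn Lam X (\<lambda>w. Hproj Gam w (Y w)) z)
   + Vproj Gam z (conn Lam X (\<lambda>w. Vproj Gam w (Y w)) z)"

definition horizontal_lift :: "'n cpt set \<Rightarrow> (real^'n::finite \<Rightarrow> 'n \<Rightarrow> 'n \<Rightarrow> 'n \<Rightarrow> real)
    \<Rightarrow> ('n cpt \<Rightarrow> 'n cpt \<Rightarrow> 'n cpt \<Rightarrow> 'n cpt) \<Rightarrow> bool" where
  "horizontal_lift W Gam Lam \<longleftrightarrow> lin_conn W Lam \<and>
     (\<forall>i j. \<forall>z\<in>W.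
        conn Lam (Ev i) (Ev j) z = 0
      \<and> conn Lam (Ev i) (Eh Gam j) z = 0
      \<and> conn Lam (Eh Gam i) (Ev j) z = - (\<Sum>h\<in>UNIV. Gam (fst z) j i h *\<^sub>R Ev h z)
      \<and> conn Lam (Eh Gam i) (Eh Gam j) z = (\<Sum>h\<in>UNIV. Gam (fst z) h i j *\<^sub>R Eh Gam h z))"

end

theory Submission
  imports Defs
begin


lemma vec_lambda_sum: "(\<chi> h. f h) = (\<Sum>h\<in>UNIV. f h *\<^sub>R axis h (1::real))"
  by (simp add: vec_eq_iff axis_def if_distrib sum.If_cases cong del: if_weak_cong)

lemma has_derivative_vec_lambda:
  fixes f f' :: "_ \<Rightarrow> 'n::finite \<Rightarrow> real"
  assumes "\<And>h. ((\<lambda>w. f w h) has_derivative (\<lambda>v. f' v h)) F"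
  shows "((\<lambda>w. \<chi> h. f w h) has_derivative (\<lambda>v. \<chi> h. f' v h)) F"
proof -
  have e: "\<And>g::_ \<Rightarrow> 'n::finite \<Rightarrow> real. (\<lambda>w. \<chi> h. g w h) = (\<lambda>w. \<Sum>h\<in>UNIV. g w h *\<^sub>R axis h (1::real))"
    by (rule ext, rule vec_lambda_sum)
  have "((\<lambda>w. \<Sum>h\<in>UNIV. f w h *\<^sub>R axis h (1::real)) has_derivative (\<lambda>v. \<Sum>h\<in>UNIV. f' v h *\<^sub>R axis h (1::real))) F"
    by (intro has_derivative_sum has_derivative_scaleR_left assms)
  then show ?thesis by (simp only: e)
qed

lemma has_derivative_nth:
  "(f has_derivative f') F \<Longrightarrow> ((\<lambda>x. f x $ i) has_derivative (\<lambda>x. f' x $ i)) F"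
  using bounded_linear.has_derivative[OF bounded_linear_vec_nth] by blast

lemma smooth_diff: "smooth_on W f \<Longrightarrow> open W \<Longrightarrow> z \<in> W \<Longrightarrow> f differentiable (at z)"
  unfolding smooth_on_def
  by (metis Ck_on.simps(2) differentiable_on_eq_differentiable_at)

lemma Ck_const: "Ck_on k W (\<lambda>_. a)"
  by (induction k arbitrary: a) auto

lemma smooth_const: "smooth_on W (\<lambda>_. a)"
  by (simp add: smooth_on_def Ck_const)

lemma linear_expand:
  fixes f :: "real^'n \<Rightarrow> real"
  assumes "linear f"
  shows "f v = (\<Sum>i\<in>UNIV. v $ i * f (axis i 1))"
proof -
  have "v = (\<Sum>i\<in>UNIV. v $ i *\<^sub>R axis i 1)"
    by (simp add: vec_eq_iff axis_def if_distrib sum.If_cases cong del: if_weak_cong)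
  hence "f v = f (\<Sum>i\<in>UNIV. v $ i *\<^sub>R axis i 1)" by simp
  also have "\<dots> = (\<Sum>i\<in>UNIV. v $ i * f (axis i 1))"
    using assms by (simp add: linear_sum linear_scale)
  finally show ?thesis .
qed

lemma dir_deriv_affine:
  fixes f :: "'a::real_normed_vector \<Rightarrow> real"
  assumes "f differentiable (at z)" and "\<And>t. f (z + t *\<^sub>R v) = K + t * L"
  shows "frechet_derivative f (at z) v = L"
proof -
  let ?D = "frechet_derivative f (at z)"
  have fd: "(f has_derivative ?D) (at z)" using assms(1) frechet_derivative_works by blast
  have l: "((\<lambda>t::real. z + t *\<^sub>R v) has_derivative (\<lambda>t. t *\<^sub>R v)) (at 0)"
    by (auto intro!: derivative_eq_intros)
  have fd': "(f has_derivative ?D) (at ((\<lambda>t::real. z + t *\<^sub>R v) 0))" using fd by simp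
  have "((f \<circ> (\<lambda>t::real. z + t *\<^sub>R v)) has_derivative (?D \<circ> (\<lambda>t. t *\<^sub>R v))) (at 0)"
    by (rule diff_chain_at[OF l fd'])
  moreover have "(f \<circ> (\<lambda>t::real. z + t *\<^sub>R v)) = (\<lambda>t. K + t * L)"
    using assms(2) by (auto simp: o_def)
  ultimately have a: "((\<lambda>t. K + t * L) has_derivative (?D \<circ> (\<lambda>t. t *\<^sub>R v))) (at 0)" by simp
  have b: "((\<lambda>t::real. K + t * L) has_derivative (\<lambda>t. t * L)) (at 0)"
    by (auto intro!: derivative_eq_intros)
  have "(?D \<circ> (\<lambda>t. t *\<^sub>R v)) = (\<lambda>t. t * L)" using has_derivative_unique[OF a b] .
  from fun_cong[OF this, of 1] show ?thesis by simp
qed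



definition SS :: "(real^'n::finite \<Rightarrow> 'n \<Rightarrow> 'n \<Rightarrow> 'n \<Rightarrow> real) \<Rightarrow> 'n cpt \<Rightarrow> 'n \<Rightarrow> 'n \<Rightarrow> real" where
  "SS Gam w h j = (\<Sum>a\<in>UNIV. snd w $ a * Gam (fst w) a h j)"

lemma Eh_eq: "Eh Gam j w = (axis j 1, \<chi> h. SS Gam w h j)"
  by (simp add: Eh_def SS_def)

lemma vcomp_eq: "vcomp Gam w u = (\<chi> h. snd u $ h - (\<Sum>j\<in>UNIV. fst u $ j * SS Gam w h j))"
  unfolding vcomp_def SS_def
  by (simp add: vec_eq_iff sum_distrib_left algebra_simps; subst sum.swap; simp add: algebra_simps)

lemma Hproj_eq: "Hproj Gam w u = (fst u, \<chi> h. (\<Sum>j\<in>UNIV. fst u $ j * SS Gam w h j))"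
  unfolding Hproj_def hcomp_def Eh_eq
  by (simp add: prod_eq_iff fst_sum snd_sum vec_eq_iff axis_def if_distrib sum.If_cases cong del: if_weak_cong)

lemma Vproj_eq: "Vproj Gam w u = (0, vcomp Gam w u)"
  unfolding Vproj_def Ev_def
  by (simp add: prod_eq_iff fst_sum snd_sum vec_eq_iff axis_def if_distrib sum.If_cases cong del: if_weak_cong)

lemma HV: "Hproj Gam w u + Vproj Gam w u = u"
  by (simp add: Hproj_eq Vproj_eq vcomp_eq prod_eq_iff vec_eq_iff)

lemma g_sym:
  assumes "\<And>i j. c (fst z) i j = c (fst z) j i"
  shows "gbar Gam c z u v = gbar Gam c z v u"
proof -
  have "(\<Sum>i\<in>UNIV. \<Sum>j\<in>UNIV. c (fst z) i j * hcomp Gam z u $ i * hcomp Gam z v $ j)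
      = (\<Sum>i\<in>UNIV. \<Sum>j\<in>UNIV. c (fst z) i j * hcomp Gam z v $ i * hcomp Gam z u $ j)"
    by (subst sum.swap) (simp add: assms algebra_simps)
  then show ?thesis unfolding gbar_def by (simp add: algebra_simps)
qed

lemma g_vert: "fst v = 0 \<Longrightarrow> gbar Gam c z u v = (\<Sum>i\<in>UNIV. fst u $ i * snd v $ i)"
  by (simp add: gbar_def hcomp_def vcomp_def)

lemma g_vert': "fst u = 0 \<Longrightarrow> gbar Gam c z u v = (\<Sum>i\<in>UNIV. snd u $ i * fst v $ i)"
  by (simp add: gbar_def hcomp_def vcomp_def)

lemma g_e: "gbar Gam c z W (0, axis k 1) = fst W $ k"
  by (simp add: g_vert axis_def if_distrib sum.If_cases cong del: if_weak_cong)

lemma g_h: "fst W = 0 \<Longrightarrow> gbar Gam c z W (axis k 1, 0) = snd W $ k"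
  by (simp add: g_vert' axis_def if_distrib sum.If_cases cong del: if_weak_cong)

lemma g_line:
  "gbar Gam c (z + t *\<^sub>R (0,b)) A B = gbar Gam c z A B + t *
     (- (\<Sum>i\<in>UNIV. fst A $ i * (\<Sum>a\<in>UNIV. \<Sum>j\<in>UNIV. b $ a * Gam (fst z) a i j * fst B $ j))
      - (\<Sum>i\<in>UNIV. (\<Sum>a\<in>UNIV. \<Sum>j\<in>UNIV. b $ a * Gam (fst z) a i j * fst A $ j) * fst B $ i))"
  unfolding gbar_def hcomp_def vcomp_def
  by (simp add: algebra_simps sum.distrib sum_subtractf sum_distrib_left sum_distrib_right)



lemma ax_r: "x * axis k (1::real) $ j = (if j = k then x else 0)"
  by (simp add: axis_def)
lemma ax_l: "axis k (1::real) $ j * x = (if j = k then x else 0)"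
  by (simp add: axis_def)
lemma if_mult0: "(if P then x else 0) * (y::real) = (if P then x * y else 0)"
  by simp
lemma mult_if0: "(y::real) * (if P then x else 0) = (if P then y * x else 0)"
  by simp
lemma sum_if0: "(\<Sum>j\<in>S. if P then f j else (0::real)) = (if P then (\<Sum>j\<in>S. f j) else 0)"
  by simp
lemmas axsimps = ax_r ax_l if_mult0 mult_if0 sum_if0

lemma sumF1:
  fixes G :: "'n::finite \<Rightarrow> 'n \<Rightarrow> 'n \<Rightarrow> real"
  assumes "\<And>a i j. G a i j = G a j i"
  shows "(\<Sum>i\<in>UNIV. A$i * (\<Sum>a\<in>UNIV. \<Sum>j\<in>UNIV. axis k 1 $ a * G a i j * B$j))
       + (\<Sum>i\<in>UNIV. (\<Sum>a\<in>UNIV. \<Sum>j\<in>UNIV. axis k 1 $ a * G a i j * A$j) * B$i)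
       = 2 * (\<Sum>i\<in>UNIV. \<Sum>j\<in>UNIV. G k i j * A$i * B$j)"
proof -
  have 1: "(\<Sum>i\<in>UNIV. A$i * (\<Sum>a\<in>UNIV. \<Sum>j\<in>UNIV. axis k 1 $ a * G a i j * B$j))
      = (\<Sum>i\<in>UNIV. \<Sum>j\<in>UNIV. G k i j * A$i * B$j)"
    by (simp add: axsimps) (simp add: sum_distrib_left algebra_simps)
  have 2: "(\<Sum>i\<in>UNIV. (\<Sum>a\<in>UNIV. \<Sum>j\<in>UNIV. axis k 1 $ a * G a i j * A$j) * B$i)
      = (\<Sum>i\<in>UNIV. \<Sum>j\<in>UNIV. G k i j * A$j * B$i)"
    by (simp add: axsimps) (simp add: sum_distrib_left algebra_simps)
  also have "\<dots> = (\<Sum>j\<in>UNIV. \<Sum>i\<in>UNIV. G k i j * A$j * B$i)" by (rule sum.swap)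
  also have "\<dots> = (\<Sum>i\<in>UNIV. \<Sum>j\<in>UNIV. G k i j * A$i * B$j)" by (simp add: assms)
  finally show ?thesis using 1 by simp
qed

lemma sumF2:
  fixes G :: "'n::finite \<Rightarrow> 'n \<Rightarrow> 'n \<Rightarrow> real"
  assumes "\<And>a i j. G a i j = G a j i"
  shows "(\<Sum>i\<in>UNIV. A$i * (\<Sum>a\<in>UNIV. \<Sum>j\<in>UNIV. b $ a * G a i j * axis k 1 $ j))
       + (\<Sum>i\<in>UNIV. (\<Sum>a\<in>UNIV. \<Sum>j\<in>UNIV. b $ a * G a i j * A$j) * axis k 1 $ i)
       = 2 * (\<Sum>a\<in>UNIV. \<Sum>i\<in>UNIV. b$a * G a i k * A$i)"
proof -
  have 1: "(\<Sum>i\<in>UNIV. A$i * (\<Sum>a\<in>UNIV. \<Sum>j\<in>UNIV. b $ a * G a i j * axis k 1 $ j))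
      = (\<Sum>i\<in>UNIV. \<Sum>a\<in>UNIV. b$a * G a i k * A$i)"
    by (simp add: axsimps sum_distrib_left algebra_simps)
  also have "\<dots> = (\<Sum>a\<in>UNIV. \<Sum>i\<in>UNIV. b$a * G a i k * A$i)" by (rule sum.swap)
  finally have 1: "(\<Sum>i\<in>UNIV. A$i * (\<Sum>a\<in>UNIV. \<Sum>j\<in>UNIV. b $ a * G a i j * axis k 1 $ j))
      = (\<Sum>a\<in>UNIV. \<Sum>i\<in>UNIV. b$a * G a i k * A$i)" .
  have 2: "(\<Sum>i\<in>UNIV. (\<Sum>a\<in>UNIV. \<Sum>j\<in>UNIV. b $ a * G a i j * A$j) * axis k 1 $ i)
      = (\<Sum>a\<in>UNIV. \<Sum>i\<in>UNIV. b$a * G a i k * A$i)"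
    by (simp add: axsimps) (simp add: assms)
  show ?thesis using 1 2 by simp
qed



definition dSS :: "(real^'n::finite \<Rightarrow> 'n \<Rightarrow> 'n \<Rightarrow> 'n \<Rightarrow> real) \<Rightarrow> 'n cpt \<Rightarrow> 'n \<Rightarrow> 'n \<Rightarrow> 'n cpt \<Rightarrow> real" where
  "dSS Gam z h j v = (\<Sum>a\<in>UNIV. snd v $ a * Gam (fst z) a h j
      + snd z $ a * frechet_derivative (\<lambda>x. Gam x a h j) (at (fst z)) (fst v))"

lemma hasGam:
  assumes "(\<lambda>x. Gam x a h j) differentiable (at (fst z))"
  shows "((\<lambda>w. Gam (fst w) a h j) has_derivative
     (\<lambda>v. frechet_derivative (\<lambda>x. Gam x a h j) (at (fst z)) (fst v))) (at z)"
proof -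
  have f: "(fst has_derivative fst) (at z)" by (rule has_derivative_fst[OF has_derivative_ident])
  have g: "((\<lambda>x. Gam x a h j) has_derivative frechet_derivative (\<lambda>x. Gam x a h j) (at (fst z))) (at (fst z))"
    using assms frechet_derivative_works by blast
  from diff_chain_at[OF f g] show ?thesis by (simp add: o_def)
qed

lemma hasSS:
  assumes "\<And>a h j. (\<lambda>x. Gam x a h j) differentiable (at (fst z))"
  shows "((\<lambda>w. SS Gam w h j) has_derivative dSS Gam z h j) (at z)"
  unfolding SS_def dSS_def[abs_def]
  apply (rule has_derivative_sum)
  apply (rule derivative_eq_intros)
    apply (rule has_derivative_nth, rule has_derivative_snd, rule has_derivative_ident)
   apply (rule hasGam[OF assms])
  apply (simp add: algebra_simps)
  done

lemma hasEh:
  assumes "\<And>a h j. (\<lambda>x. Gam x a h j) differentiable (at (fst z))"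
  shows "(Eh Gam j has_derivative (\<lambda>v. (0, \<chi> h. dSS Gam z h j v))) (at z)"
proof -
  have e: "Eh Gam j = (\<lambda>w. (axis j 1, \<chi> h. SS Gam w h j))" by (rule ext, rule Eh_eq)
  show ?thesis unfolding e
    by (intro has_derivative_Pair has_derivative_const has_derivative_vec_lambda hasSS assms)
qed

lemma hasHY:
  assumes "\<And>a h j. (\<lambda>x. Gam x a h j) differentiable (at (fst z))"
    and Y: "(Y has_derivative DY) (at z)"
  shows "((\<lambda>w. Hproj Gam w (Y w)) has_derivative (\<lambda>v. (fst (DY v), \<chi> h.
      (\<Sum>j\<in>UNIV. fst (DY v) $ j * SS Gam z h j + fst (Y z) $ j * dSS Gam z h j v)))) (at z)"
proof -
  have e: "(\<lambda>w. Hproj Gam w (Y w)) = (\<lambda>w. (fst (Y w), \<chi> h. (\<Sum>j\<in>UNIV. fst (Y w) $ j * SS Gam w h j)))"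
    by (rule ext, rule Hproj_eq)
  have Y1: "\<And>j. ((\<lambda>w. fst (Y w) $ j) has_derivative (\<lambda>v. fst (DY v) $ j)) (at z)"
    by (intro has_derivative_nth has_derivative_fst Y)
  show ?thesis unfolding e
    apply (intro has_derivative_Pair has_derivative_fst Y has_derivative_vec_lambda has_derivative_sum)
    apply (rule derivative_eq_intros, rule Y1, rule hasSS[OF assms(1)])
    apply (simp add: algebra_simps)
    done
qed

lemma g_diff:
  assumes "\<And>a h j. (\<lambda>x. Gam x a h j) differentiable (at (fst z))"
    and "\<And>i j. (\<lambda>x. c x i j) differentiable (at (fst z))"
  shows "(\<lambda>w. gbar Gam c w A B) differentiable (at z)"
proof -
  have G: "(\<lambda>w. Gam (fst w) a h j) differentiable (at z)" for a h j
    by (rule differentiableI, rule hasGam, rule assms(1))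
  have C: "\<And>i j. (\<lambda>w. c (fst w) i j) differentiable (at z)"
  proof -
    fix i j
    have f: "(fst has_derivative fst) (at z)" by (rule has_derivative_fst[OF has_derivative_ident])
    have g: "((\<lambda>x. c x i j) has_derivative frechet_derivative (\<lambda>x. c x i j) (at (fst z))) (at (fst z))"
      using assms(2) frechet_derivative_works by blast
    from diff_chain_at[OF f g] show "(\<lambda>w. c (fst w) i j) differentiable (at z)"
      by (auto simp: o_def intro: differentiableI)
  qed
  have P: "\<And>a. (\<lambda>w. snd w $ a) differentiable (at z)"
    using has_derivative_nth[OF has_derivative_snd[OF has_derivative_ident]] differentiableI by blast
  show ?thesis unfolding gbar_def hcomp_def vcomp_def
    by (simp add: G C P differentiable_sum differentiable_mult differentiable_add differentiable_diff)
qed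



lemma main_part:
  fixes U :: "(real^'n) set"
    and Gam :: "real^'n \<Rightarrow> 'n \<Rightarrow> 'n \<Rightarrow> 'n \<Rightarrow> real"
    and c :: "real^'n \<Rightarrow> 'n \<Rightarrow> 'n \<Rightarrow> real"
    and LC HL :: "'n cpt \<Rightarrow> 'n cpt \<Rightarrow> 'n cpt \<Rightarrow> 'n cpt"
  assumes "open U"
    and "\<And>h i j. smooth_on U (\<lambda>x. Gam x h i j)"
    and "\<And>i j. smooth_on U (\<lambda>x. c x i j)"
    and "\<And>x h i j. x \<in> U \<Longrightarrow> Gam x h i j = Gam x h j i"
    and "\<And>x i j. x \<in> U \<Longrightarrow> c x i j = c x j i"
    and "levi_civita (U \<times> UNIV) (gbar Gam c) LC"
    and "horizontal_lift (U \<times> UNIV) Gam HL"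
    and z: "z \<in> U \<times> UNIV"
  shows "(\<forall>A B k. fst (LC z A B) $ k = (\<Sum>i\<in>UNIV. \<Sum>j\<in>UNIV. Gam (fst z) k i j * fst A $ i * fst B $ j))
     \<and> (\<forall>A B k. fst B = 0 \<longrightarrow> snd (LC z A B) $ k = - (\<Sum>a\<in>UNIV. \<Sum>i\<in>UNIV. snd B $ a * Gam (fst z) a i k * fst A $ i))"
proof -
  have oW: "open (U \<times> (UNIV :: (real^'n) set))" by (simp add: open_Times assms(1))
  have xU: "fst z \<in> U" using z by auto
  have Gd: "\<And>a h j. (\<lambda>x. Gam x a h j) differentiable (at (fst z))"
    using smooth_diff[OF assms(2) assms(1) xU] .
  have cd: "\<And>i j. (\<lambda>x. c x i j) differentiable (at (fst z))"
    using smooth_diff[OF assms(3) assms(1) xU] .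
  have Gs: "\<And>a i j. Gam (fst z) a i j = Gam (fst z) a j i" using assms(4) xU by blast
  have cs: "\<And>i j. c (fst z) i j = c (fst z) j i" using assms(5) xU by blast
  have LCb: "bilinear (LC z)" using assms(6) z unfolding levi_civita_def lin_conn_def by blast
  have Lsym: "LC z A B = LC z B A" for A B
  proof -
    have "torsion_free_conn (U \<times> UNIV) LC" using assms(6) unfolding levi_civita_def by blast
    then have "conn LC (\<lambda>_. A) (\<lambda>_. B) z - conn LC (\<lambda>_. B) (\<lambda>_. A) z = lie (\<lambda>_. A) (\<lambda>_. B) z"
      unfolding torsion_free_conn_def using smooth_const z by blast
    then show ?thesis by (simp add: conn_def lie_def)
  qed
  have met: "frechet_derivative (\<lambda>w. gbar Gam c w B C) (at z) A
      = gbar Gam c z (LC z A B) C + gbar Gam c z B (LC z A C)" for A B C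
  proof -
    have "metric_conn (U \<times> UNIV) (gbar Gam c) LC" using assms(6) unfolding levi_civita_def by blast
    then have "frechet_derivative (\<lambda>w. gbar Gam c w ((\<lambda>_. B) w) ((\<lambda>_. C) w)) (at z) ((\<lambda>_. A) z)
       = gbar Gam c z (conn LC (\<lambda>_. A) (\<lambda>_. B) z) ((\<lambda>_. C) z) + gbar Gam c z ((\<lambda>_. B) z) (conn LC (\<lambda>_. A) (\<lambda>_. C) z)"
      unfolding metric_conn_def using smooth_const z by blast
    then show ?thesis by (simp add: conn_def)
  qed
  define T where "T A B C = frechet_derivative (\<lambda>w. gbar Gam c w B C) (at z) A" for A B C
  have kos: "2 * gbar Gam c z (LC z A B) C = T A B C + T B A C - T C A B" for A B C
  proof -
    have a: "T A B C = gbar Gam c z (LC z A B) C + gbar Gam c z B (LC z A C)" unfolding T_def met ..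
    have b: "T B A C = gbar Gam c z (LC z A B) C + gbar Gam c z A (LC z B C)"
      unfolding T_def met by (simp add: Lsym[of B A])
    have d: "T C A B = gbar Gam c z B (LC z A C) + gbar Gam c z A (LC z B C)"
      unfolding T_def met by (simp add: Lsym[of C A] Lsym[of C B] g_sym[of c z Gam "LC z A C" B, OF cs])
    show ?thesis using a b d by linarith
  qed
  have T1: "T A B C = 0" if "fst C = 0" for A B C
  proof -
    have "(\<lambda>w. gbar Gam c w B C) = (\<lambda>w. \<Sum>i\<in>UNIV. fst B $ i * snd C $ i)"
      using g_vert[OF that] by (rule ext)
    then show ?thesis unfolding T_def by simp
  qed
  have T1': "T A B C = 0" if "fst B = 0" for A B C
  proof -
    have "(\<lambda>w. gbar Gam c w B C) = (\<lambda>w. \<Sum>i\<in>UNIV. snd B $ i * fst C $ i)"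
      using g_vert'[OF that] by (rule ext)
    then show ?thesis unfolding T_def by simp
  qed
  have T2: "T (0,b) A B = (- (\<Sum>i\<in>UNIV. fst A $ i * (\<Sum>a\<in>UNIV. \<Sum>j\<in>UNIV. b $ a * Gam (fst z) a i j * fst B $ j))
      - (\<Sum>i\<in>UNIV. (\<Sum>a\<in>UNIV. \<Sum>j\<in>UNIV. b $ a * Gam (fst z) a i j * fst A $ j) * fst B $ i))" for b A B
    unfolding T_def by (rule dir_deriv_affine[OF g_diff[OF Gd cd] g_line])
  have F1: "fst (LC z A B) $ k = (\<Sum>i\<in>UNIV. \<Sum>j\<in>UNIV. Gam (fst z) k i j * fst A $ i * fst B $ j)" for A B k
  proof -
    have "2 * fst (LC z A B) $ k = T A B (0, axis k 1) + T B A (0, axis k 1) - T (0, axis k 1) A B"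
      using kos[of A B "(0, axis k 1)"] by (simp add: g_e)
    also have "\<dots> = - T (0, axis k 1) A B" by (simp add: T1)
    also have "\<dots> = 2 * (\<Sum>i\<in>UNIV. \<Sum>j\<in>UNIV. Gam (fst z) k i j * fst A $ i * fst B $ j)"
      unfolding T2 using sumF1[where G="Gam (fst z)" and A="fst A" and k=k and B="fst B", OF Gs] by linarith
    finally show ?thesis by simp
  qed
  have F2: "snd (LC z A B) $ k = - (\<Sum>a\<in>UNIV. \<Sum>i\<in>UNIV. snd B $ a * Gam (fst z) a i k * fst A $ i)"
    if fB0: "fst B = 0" for A B k
  proof -
    have fB: "B = (0, snd B)" by (simp add: prod_eq_iff fB0)
    have fst0: "fst (LC z A B) = 0" by (simp add: vec_eq_iff F1 fB0)
    have "2 * snd (LC z A B) $ k = 2 * gbar Gam c z (LC z A B) (axis k 1, 0)" by (simp add: g_h fst0)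
    also have "\<dots> = T A B (axis k 1, 0) + T B A (axis k 1, 0) - T (axis k 1, 0) A B" by (rule kos)
    also have "\<dots> = T B A (axis k 1, 0)" using T1'[OF fB0] T1[OF fB0] by simp
    also have "\<dots> = T (0, snd B) A (axis k 1, 0)" using fB by simp
    also have "\<dots> = - 2 * (\<Sum>a\<in>UNIV. \<Sum>i\<in>UNIV. snd B $ a * Gam (fst z) a i k * fst A $ i)"
      unfolding T2 fst_conv using sumF2[where G="Gam (fst z)" and A="fst A" and b="snd B" and k=k, OF Gs] by linarith
    finally show ?thesis by simp
  qed
  show ?thesis using F1 F2 by blast
qed



lemma bil_sum:
  assumes "bilinear h"
  shows "h (\<Sum>i\<in>I. s i *\<^sub>R e i) (\<Sum>j\<in>J. t j *\<^sub>R f j) = (\<Sum>i\<in>I. \<Sum>j\<in>J. (s i * t j) *\<^sub>R h (e i) (f j))"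
proof -
  from assms have l: "\<And>y. linear (\<lambda>x. h x y)" and r: "\<And>x. linear (h x)"
    by (simp_all add: bilinear_def)
  show ?thesis
    by (simp add: linear_sum[OF l] linear_scale[OF l] linear_sum[OF r] linear_scale[OF r] scaleR_sum_right)
      (subst sum.swap, simp add: mult.commute)
qed

lemma decomp: "u = (\<Sum>i\<in>UNIV. fst u $ i *\<^sub>R Eh Gam i z) + (\<Sum>h\<in>UNIV. vcomp Gam z u $ h *\<^sub>R Ev h z)"
  using HV[of Gam z u] unfolding Hproj_def Vproj_def hcomp_def by simp

lemma Ev_const: "Ev j = (\<lambda>_. (0, axis j 1))"
  by (rule ext) (simp add: Ev_def)

lemma HL_part:
  assumes HL: "horizontal_lift W Gam HL" and z: "z \<in> W"
    and Gd: "\<And>a h j. (\<lambda>x. Gam x a h j) differentiable (at (fst z))"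
  shows "HL z u v =
      (\<Sum>i\<in>UNIV. \<Sum>j\<in>UNIV. (fst u $ i * fst v $ j) *\<^sub>R
          ((\<Sum>h\<in>UNIV. Gam (fst z) h i j *\<^sub>R Eh Gam h z) - (0, \<chi> h. dSS Gam z h j (Eh Gam i z))))
    + ((\<Sum>i\<in>UNIV. \<Sum>j\<in>UNIV. (vcomp Gam z u $ i * fst v $ j) *\<^sub>R
          (- (0, \<chi> h. dSS Gam z h j (Ev i z))))
    + (\<Sum>i\<in>UNIV. \<Sum>j\<in>UNIV. (fst u $ i * vcomp Gam z v $ j) *\<^sub>R
          (- (\<Sum>h\<in>UNIV. Gam (fst z) j i h *\<^sub>R Ev h z))))"
proof -
  have b: "bilinear (HL z)" using HL z unfolding horizontal_lift_def lin_conn_def by blast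
  have DEh: "frechet_derivative (Eh Gam j) (at z) = (\<lambda>v. (0, \<chi> h. dSS Gam z h j v))" for j
    using frechet_derivative_at[OF hasEh[OF Gd]] by simp
  have DEv: "frechet_derivative (Ev j) (at z) = (\<lambda>v. 0)" for j
    unfolding Ev_const by simp
  have cond: "conn HL (Ev i) (Ev j) z = 0 \<and> conn HL (Ev i) (Eh Gam j) z = 0
      \<and> conn HL (Eh Gam i) (Ev j) z = - (\<Sum>h\<in>UNIV. Gam (fst z) j i h *\<^sub>R Ev h z)
      \<and> conn HL (Eh Gam i) (Eh Gam j) z = (\<Sum>h\<in>UNIV. Gam (fst z) h i j *\<^sub>R Eh Gam h z)" for i j
    using HL z unfolding horizontal_lift_def by blast
  have P1: "HL z (Ev i z) (Ev j z) = 0" for i j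
    using cond[of i j] unfolding conn_def DEv by simp
  have P2: "HL z (Ev i z) (Eh Gam j z) = - (0, \<chi> h. dSS Gam z h j (Ev i z))" for i j
  proof -
    have e: "HL z (Ev i z) (Eh Gam j z) + (0, \<chi> h. dSS Gam z h j (Ev i z)) = 0"
      using cond[of i j] unfolding conn_def DEh DEv by (simp add: add.commute)
    show ?thesis by (subst eq_neg_iff_add_eq_0) (rule e)
  qed
  have P3: "HL z (Eh Gam i z) (Ev j z) = - (\<Sum>h\<in>UNIV. Gam (fst z) j i h *\<^sub>R Ev h z)" for i j
    using cond[of i j] unfolding conn_def DEv DEh by simp
  have P4: "HL z (Eh Gam i z) (Eh Gam j z) = (\<Sum>h\<in>UNIV. Gam (fst z) h i j *\<^sub>R Eh Gam h z) - (0, \<chi> h. dSS Gam z h j (Eh Gam i z))" for i j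
  proof -
    have e: "HL z (Eh Gam i z) (Eh Gam j z) + (0, \<chi> h. dSS Gam z h j (Eh Gam i z)) = (\<Sum>h\<in>UNIV. Gam (fst z) h i j *\<^sub>R Eh Gam h z)"
      using cond[of i j] unfolding conn_def DEh DEv by (simp add: add.commute)
    show ?thesis by (subst eq_diff_eq) (rule e)
  qed
  have "HL z u v = HL z ((\<Sum>i\<in>UNIV. fst u $ i *\<^sub>R Eh Gam i z) + (\<Sum>h\<in>UNIV. vcomp Gam z u $ h *\<^sub>R Ev h z))
      ((\<Sum>i\<in>UNIV. fst v $ i *\<^sub>R Eh Gam i z) + (\<Sum>h\<in>UNIV. vcomp Gam z v $ h *\<^sub>R Ev h z))"
    using decomp[of u Gam z] decomp[of v Gam z] by simp
  then show ?thesis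
    by (simp only: bilinear_ladd[OF b] bilinear_radd[OF b] bil_sum[OF b] P1 P2 P3 P4 scaleR_zero_right sum.neutral_const add_0_right add.assoc)
qed



lemma alg_a:
  fixes G :: "'n::finite \<Rightarrow> 'n \<Rightarrow> 'n \<Rightarrow> real"
  shows "(\<Sum>j\<in>UNIV. (\<Sum>i\<in>UNIV. \<Sum>l\<in>UNIV. G j i l * x1 i * y1 l) * S k j)
       = (\<Sum>i\<in>UNIV. \<Sum>j\<in>UNIV. x1 i * y1 j * (\<Sum>h\<in>UNIV. G h i j * S k h))"
proof -
  have "(\<Sum>j\<in>UNIV. (\<Sum>i\<in>UNIV. \<Sum>l\<in>UNIV. G j i l * x1 i * y1 l) * S k j)
      = (\<Sum>j\<in>UNIV. \<Sum>i\<in>UNIV. \<Sum>l\<in>UNIV. G j i l * x1 i * y1 l * S k j)"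
    by (simp add: sum_distrib_right)
  also have "\<dots> = (\<Sum>i\<in>UNIV. \<Sum>j\<in>UNIV. \<Sum>l\<in>UNIV. G j i l * x1 i * y1 l * S k j)"
    by (rule sum.swap)
  also have "\<dots> = (\<Sum>i\<in>UNIV. \<Sum>l\<in>UNIV. \<Sum>j\<in>UNIV. G j i l * x1 i * y1 l * S k j)"
    by (rule sum.cong[OF refl], rule sum.swap)
  also have "\<dots> = (\<Sum>i\<in>UNIV. \<Sum>j\<in>UNIV. x1 i * y1 j * (\<Sum>h\<in>UNIV. G h i j * S k h))"
    by (simp add: sum_distrib_left algebra_simps)
  finally show ?thesis .
qed

lemma alg_b:
  fixes D :: "'n::finite \<Rightarrow> 'n \<Rightarrow> 'n \<Rightarrow> 'n \<Rightarrow> real"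
  shows "(\<Sum>j\<in>UNIV. y1 j * (\<Sum>a\<in>UNIV. p a * (\<Sum>i\<in>UNIV. x1 i * D a k j i)))
       = (\<Sum>i\<in>UNIV. \<Sum>j\<in>UNIV. x1 i * y1 j * (\<Sum>a\<in>UNIV. p a * D a k j i))"
proof -
  have "(\<Sum>j\<in>UNIV. y1 j * (\<Sum>a\<in>UNIV. p a * (\<Sum>i\<in>UNIV. x1 i * D a k j i)))
      = (\<Sum>j\<in>UNIV. \<Sum>a\<in>UNIV. \<Sum>i\<in>UNIV. x1 i * y1 j * p a * D a k j i)"
    by (simp add: sum_distrib_left algebra_simps)
  also have "\<dots> = (\<Sum>j\<in>UNIV. \<Sum>i\<in>UNIV. \<Sum>a\<in>UNIV. x1 i * y1 j * p a * D a k j i)"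
    by (rule sum.cong[OF refl], rule sum.swap)
  also have "\<dots> = (\<Sum>i\<in>UNIV. \<Sum>j\<in>UNIV. \<Sum>a\<in>UNIV. x1 i * y1 j * p a * D a k j i)"
    by (rule sum.swap)
  also have "\<dots> = (\<Sum>i\<in>UNIV. \<Sum>j\<in>UNIV. x1 i * y1 j * (\<Sum>a\<in>UNIV. p a * D a k j i))"
    by (simp add: sum_distrib_left algebra_simps)
  finally show ?thesis .
qed

lemma alg_c:
  fixes G :: "'n::finite \<Rightarrow> 'n \<Rightarrow> 'n \<Rightarrow> real"
  shows "(\<Sum>j\<in>UNIV. y1 j * (\<Sum>a\<in>UNIV. x2 a * G a k j))
       = (\<Sum>i\<in>UNIV. \<Sum>j\<in>UNIV. x2 i * y1 j * G i k j)"
proof -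
  have "(\<Sum>j\<in>UNIV. y1 j * (\<Sum>a\<in>UNIV. x2 a * G a k j)) = (\<Sum>j\<in>UNIV. \<Sum>i\<in>UNIV. x2 i * y1 j * G i k j)"
    by (simp add: sum_distrib_left algebra_simps)
  also have "\<dots> = (\<Sum>i\<in>UNIV. \<Sum>j\<in>UNIV. x2 i * y1 j * G i k j)" by (rule sum.swap)
  finally show ?thesis .
qed

lemma alg_d:
  fixes G :: "'n::finite \<Rightarrow> 'n \<Rightarrow> 'n \<Rightarrow> real"
  shows "(\<Sum>i\<in>UNIV. \<Sum>j\<in>UNIV. x1 i * y1 j * (\<Sum>a\<in>UNIV. S a i * G a k j))
       = (\<Sum>i\<in>UNIV. \<Sum>j\<in>UNIV. (\<Sum>l\<in>UNIV. x1 l * S i l) * y1 j * G i k j)"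
proof -
  have "(\<Sum>i\<in>UNIV. \<Sum>j\<in>UNIV. x1 i * y1 j * (\<Sum>a\<in>UNIV. S a i * G a k j))
      = (\<Sum>i\<in>UNIV. \<Sum>j\<in>UNIV. \<Sum>a\<in>UNIV. x1 i * S a i * y1 j * G a k j)"
    by (simp add: sum_distrib_left algebra_simps)
  also have "\<dots> = (\<Sum>i\<in>UNIV. \<Sum>a\<in>UNIV. \<Sum>j\<in>UNIV. x1 i * S a i * y1 j * G a k j)"
    by (rule sum.cong[OF refl], rule sum.swap)
  also have "\<dots> = (\<Sum>a\<in>UNIV. \<Sum>i\<in>UNIV. \<Sum>j\<in>UNIV. x1 i * S a i * y1 j * G a k j)"
    by (rule sum.swap)
  also have "\<dots> = (\<Sum>a\<in>UNIV. \<Sum>j\<in>UNIV. \<Sum>i\<in>UNIV. x1 i * S a i * y1 j * G a k j)"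
    by (rule sum.cong[OF refl], rule sum.swap)
  also have "\<dots> = (\<Sum>i\<in>UNIV. \<Sum>j\<in>UNIV. (\<Sum>l\<in>UNIV. x1 l * S i l) * y1 j * G i k j)"
    by (simp add: sum_distrib_right sum_distrib_left algebra_simps)
  finally show ?thesis .
qed

lemma alg_main:
  fixes G :: "'n::finite \<Rightarrow> 'n \<Rightarrow> 'n \<Rightarrow> real" and D :: "'n \<Rightarrow> 'n \<Rightarrow> 'n \<Rightarrow> 'n \<Rightarrow> real"
  shows "(\<Sum>j\<in>UNIV. (\<Sum>i\<in>UNIV. \<Sum>l\<in>UNIV. G j i l * u i * w l) * S k j)
     - (\<Sum>j\<in>UNIV. w j * (\<Sum>a\<in>UNIV. q a * G a k j + p a * (\<Sum>i\<in>UNIV. u i * D a k j i)))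
   = (\<Sum>i\<in>UNIV. \<Sum>j\<in>UNIV. u i * w j * ((\<Sum>h\<in>UNIV. G h i j * S k h)
          - (\<Sum>a\<in>UNIV. S a i * G a k j + p a * D a k j i)))
     - (\<Sum>i\<in>UNIV. \<Sum>j\<in>UNIV. (q i - (\<Sum>l\<in>UNIV. u l * S i l)) * w j * G i k j)"
proof -
  have L: "(\<Sum>j\<in>UNIV. w j * (\<Sum>a\<in>UNIV. q a * G a k j + p a * (\<Sum>i\<in>UNIV. u i * D a k j i)))
     = (\<Sum>j\<in>UNIV. w j * (\<Sum>a\<in>UNIV. q a * G a k j)) + (\<Sum>j\<in>UNIV. w j * (\<Sum>a\<in>UNIV. p a * (\<Sum>i\<in>UNIV. u i * D a k j i)))"
    by (simp add: sum.distrib distrib_left)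
  have R1: "(\<Sum>i\<in>UNIV. \<Sum>j\<in>UNIV. u i * w j * ((\<Sum>h\<in>UNIV. G h i j * S k h)
          - (\<Sum>a\<in>UNIV. S a i * G a k j + p a * D a k j i)))
     = (\<Sum>i\<in>UNIV. \<Sum>j\<in>UNIV. u i * w j * (\<Sum>h\<in>UNIV. G h i j * S k h))
      - (\<Sum>i\<in>UNIV. \<Sum>j\<in>UNIV. u i * w j * (\<Sum>a\<in>UNIV. S a i * G a k j))
      - (\<Sum>i\<in>UNIV. \<Sum>j\<in>UNIV. u i * w j * (\<Sum>a\<in>UNIV. p a * D a k j i))"
    by (simp add: sum.distrib sum_subtractf right_diff_distrib distrib_left)
  have R2: "(\<Sum>i\<in>UNIV. \<Sum>j\<in>UNIV. (q i - (\<Sum>l\<in>UNIV. u l * S i l)) * w j * G i k j)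
     = (\<Sum>i\<in>UNIV. \<Sum>j\<in>UNIV. q i * w j * G i k j)
      - (\<Sum>i\<in>UNIV. \<Sum>j\<in>UNIV. (\<Sum>l\<in>UNIV. u l * S i l) * w j * G i k j)"
    by (simp add: sum_subtractf left_diff_distrib)
  show ?thesis unfolding L R1 R2 alg_a alg_b alg_c alg_d by simp
qed



theorem proposition5:
  fixes U :: "(real^'n) set"
    and Gam :: "real^'n \<Rightarrow> 'n \<Rightarrow> 'n \<Rightarrow> 'n \<Rightarrow> real"
    and c :: "real^'n \<Rightarrow> 'n \<Rightarrow> 'n \<Rightarrow> real"
    and LC HL :: "'n cpt \<Rightarrow> 'n cpt \<Rightarrow> 'n cpt \<Rightarrow> 'n cpt"
  assumes "open U"
    and "\<And>h i j. smooth_on U (\<lambda>x. Gam x h i j)"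
    and "\<And>i j. smooth_on U (\<lambda>x. c x i j)"
    and "\<And>x h i j. x \<in> U \<Longrightarrow> Gam x h i j = Gam x h j i"
    and "\<And>x i j. x \<in> U \<Longrightarrow> c x i j = c x j i"
    and "levi_civita (U \<times> UNIV) (gbar Gam c) LC"
    and "horizontal_lift (U \<times> UNIV) Gam HL"
  shows "\<forall>X Y. smooth_on (U \<times> UNIV) X \<longrightarrow> smooth_on (U \<times> UNIV) Y \<longrightarrow>
           (\<forall>z\<in>U \<times> UNIV. svk Gam LC X Y z = conn HL X Y z)"
proof (intro allI impI ballI)
  fix X Y :: "'n cpt \<Rightarrow> 'n cpt" and z :: "'n cpt"
  assume sX: "smooth_on (U \<times> UNIV) X" and sY: "smooth_on (U \<times> UNIV) Y" and z: "z \<in> U \<times> UNIV"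
  have oW: "open (U \<times> (UNIV :: (real^'n) set))" by (simp add: open_Times assms(1))
  have xU: "fst z \<in> U" using z by auto
  have Gd: "\<And>a h j. (\<lambda>x. Gam x a h j) differentiable (at (fst z))"
    using smooth_diff[OF assms(2) assms(1) xU] .
  have Gs: "\<And>a i j. Gam (fst z) a i j = Gam (fst z) a j i" using assms(4) xU by blast
  have MP: "(\<forall>A B k. fst (LC z A B) $ k = (\<Sum>i\<in>UNIV. \<Sum>j\<in>UNIV. Gam (fst z) k i j * fst A $ i * fst B $ j))
     \<and> (\<forall>A B k. fst B = 0 \<longrightarrow> snd (LC z A B) $ k = - (\<Sum>a\<in>UNIV. \<Sum>i\<in>UNIV. snd B $ a * Gam (fst z) a i k * fst A $ i))"
    apply (rule main_part[where U=U and HL=HL and c=c])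
    using assms z by auto
  have F1: "\<And>A B k. fst (LC z A B) $ k = (\<Sum>i\<in>UNIV. \<Sum>j\<in>UNIV. Gam (fst z) k i j * fst A $ i * fst B $ j)"
    using MP by blast
  have F2: "\<And>A B k. fst B = 0 \<Longrightarrow> snd (LC z A B) $ k = - (\<Sum>a\<in>UNIV. \<Sum>i\<in>UNIV. snd B $ a * Gam (fst z) a i k * fst A $ i)"
    using MP by blast
  define DY where "DY = frechet_derivative Y (at z)"
  have hY: "(Y has_derivative DY) (at z)"
    unfolding DY_def using smooth_diff[OF sY oW z] frechet_derivative_works by blast
  have lDY: "linear DY" using hY has_derivative_linear by blast
  define DH where "DH = (\<lambda>v. (fst (DY v), \<chi> h.
      (\<Sum>j\<in>UNIV. fst (DY v) $ j * SS Gam z h j + fst (Y z) $ j * dSS Gam z h j v)))"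
  have hH: "((\<lambda>w. Hproj Gam w (Y w)) has_derivative DH) (at z)"
    unfolding DH_def by (rule hasHY[OF Gd hY])
  have eV: "(\<lambda>w. Vproj Gam w (Y w)) = (\<lambda>w. Y w - Hproj Gam w (Y w))"
    by (rule ext) (metis HV add_diff_cancel_left')
  have hV: "((\<lambda>w. Vproj Gam w (Y w)) has_derivative (\<lambda>v. DY v - DH v)) (at z)"
    unfolding eV by (intro has_derivative_diff hY hH)
  have svk: "svk Gam LC X Y z = Hproj Gam z (DH (X z) + LC z (X z) (Hproj Gam z (Y z)))
      + Vproj Gam z (DY (X z) - DH (X z) + LC z (X z) (Vproj Gam z (Y z)))"
    unfolding svk_def conn_def frechet_derivative_at[OF hH, symmetric] frechet_derivative_at[OF hV, symmetric] ..
  have hl: "conn HL X Y z = DY (X z) + HL z (X z) (Y z)"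
    unfolding conn_def DY_def ..
  define x1 where "x1 = fst (X z)"
  define x2 where "x2 = snd (X z)"
  define y1 where "y1 = fst (Y z)"
  define y2 where "y2 = snd (Y z)"
  define d1 where "d1 = fst (DY (X z))"
  define d2 where "d2 = snd (DY (X z))"
  define G where "G = Gam (fst z)"
  define S where "S = SS Gam z"
  define vY where "vY = vcomp Gam z (Y z)"
  define vX where "vX = vcomp Gam z (X z)"
  define gam where "gam = (\<chi> k. \<Sum>i\<in>UNIV. \<Sum>j\<in>UNIV. G k i j * x1 $ i * y1 $ j)"
  define HY where "HY = Hproj Gam z (Y z)"
  define VY where "VY = Vproj Gam z (Y z)"
  have HY1: "fst HY = y1" unfolding HY_def y1_def by (simp add: Hproj_eq)
  have HY2: "snd HY = (\<chi> h. \<Sum>j\<in>UNIV. y1 $ j * S h j)" unfolding HY_def y1_def S_def by (simp add: Hproj_eq)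
  have VY1: "fst VY = 0" unfolding VY_def by (simp add: Vproj_eq)
  have VY2: "snd VY = vY" unfolding VY_def vY_def by (simp add: Vproj_eq)
  have e1: "fst (LC z (X z) HY) = gam"
    by (rule vec_eq_iff[THEN iffD2], simp add: F1 HY1 gam_def G_def x1_def)
  have e2: "fst (LC z (X z) VY) = 0"
    by (rule vec_eq_iff[THEN iffD2], simp add: F1 VY1)
  have e3: "snd (LC z (X z) VY) = (\<chi> k. - (\<Sum>a\<in>UNIV. \<Sum>i\<in>UNIV. vY $ a * G a i k * x1 $ i))"
    by (rule vec_eq_iff[THEN iffD2], simp add: F2 VY1 VY2 G_def x1_def)
  have fstL: "fst (svk Gam LC X Y z) = d1 + gam"
    unfolding svk HY_def[symmetric] VY_def[symmetric] by (simp add: Hproj_eq Vproj_eq e1 DH_def d1_def)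
  have fstR: "fst (conn HL X Y z) = d1 + gam"
    unfolding hl HL_part[OF assms(7) z Gd]
    by (simp add: vec_eq_iff fst_sum Eh_eq Ev_def axsimps d1_def gam_def G_def x1_def y1_def algebra_simps)
  have sndL: "snd (svk Gam LC X Y z) $ k = d2 $ k + (\<Sum>j\<in>UNIV. gam $ j * S k j)
      - (\<Sum>j\<in>UNIV. y1 $ j * dSS Gam z k j (X z)) - (\<Sum>a\<in>UNIV. \<Sum>i\<in>UNIV. vY $ a * G a i k * x1 $ i)" for k
    unfolding svk HY_def[symmetric] VY_def[symmetric]
    by (simp add: Hproj_eq Vproj_eq vcomp_eq e1 e2 e3 DH_def d1_def d2_def S_def y1_def sum.distrib algebra_simps)
  define D where "D = (\<lambda>a k j i. frechet_derivative (\<lambda>x. Gam x a k j) (at (fst z)) (axis i 1))"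
  have lin: "linear (frechet_derivative (\<lambda>x. Gam x a k j) (at (fst z)))" for a k j
    by (rule linear_frechet_derivative[OF Gd])
  have dEv: "dSS Gam z h j (0, axis i 1) = G i h j" for h j i
    unfolding dSS_def G_def by (simp add: linear_0[OF lin] axsimps)
  have dEhs: "dSS Gam z k j (axis i 1, \<chi> h. S h i) = (\<Sum>a\<in>UNIV. S a i * G a k j + snd z $ a * D a k j i)" for k j i
    unfolding dSS_def G_def D_def by simp
  have dXs: "dSS Gam z k j (X z) = (\<Sum>a\<in>UNIV. x2 $ a * G a k j + snd z $ a * (\<Sum>i\<in>UNIV. x1 $ i * D a k j i))" for k j
    unfolding dSS_def G_def D_def x1_def x2_def by (simp add: linear_expand[OF lin, where v="fst (X z)"])
  have vXs: "vX $ i = x2 $ i - (\<Sum>l\<in>UNIV. x1 $ l * S i l)" for i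
    unfolding vX_def x1_def x2_def S_def by (simp add: vcomp_eq)
  have sndR: "snd (conn HL X Y z) $ k = d2 $ k
      + (\<Sum>i\<in>UNIV. \<Sum>j\<in>UNIV. x1 $ i * y1 $ j * ((\<Sum>h\<in>UNIV. G h i j * S k h) - dSS Gam z k j (axis i 1, \<chi> h. S h i)))
      - (\<Sum>i\<in>UNIV. \<Sum>j\<in>UNIV. vX $ i * y1 $ j * G i k j)
      - (\<Sum>i\<in>UNIV. \<Sum>j\<in>UNIV. x1 $ i * vY $ j * G j i k)" for k
    unfolding hl HL_part[OF assms(7) z Gd]
    by (simp add: snd_sum Eh_eq Ev_def axsimps d2_def G_def[symmetric] x1_def[symmetric] y1_def[symmetric]
        vX_def[symmetric] vY_def[symmetric] S_def[symmetric] dEv sum_negf)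
  show "svk Gam LC X Y z = conn HL X Y z"
  proof (rule prod_eqI)
    show "fst (svk Gam LC X Y z) = fst (conn HL X Y z)" using fstL fstR by simp
    show "snd (svk Gam LC X Y z) = snd (conn HL X Y z)"
    proof (rule vec_eq_iff[THEN iffD2], rule allI)
      fix k
      have A1: "(\<Sum>j\<in>UNIV. gam $ j * S k j) = (\<Sum>j\<in>UNIV. (\<Sum>i\<in>UNIV. \<Sum>l\<in>UNIV. G j i l * x1 $ i * y1 $ l) * S k j)"
        by (simp add: gam_def)
      have A2: "(\<Sum>j\<in>UNIV. y1 $ j * dSS Gam z k j (X z))
          = (\<Sum>j\<in>UNIV. y1 $ j * (\<Sum>a\<in>UNIV. x2 $ a * G a k j + snd z $ a * (\<Sum>i\<in>UNIV. x1 $ i * D a k j i)))"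
        by (simp add: dXs)
      have A3: "(\<Sum>i\<in>UNIV. \<Sum>j\<in>UNIV. x1 $ i * y1 $ j * ((\<Sum>h\<in>UNIV. G h i j * S k h) - dSS Gam z k j (axis i 1, \<chi> h. S h i)))
          = (\<Sum>i\<in>UNIV. \<Sum>j\<in>UNIV. x1 $ i * y1 $ j * ((\<Sum>h\<in>UNIV. G h i j * S k h)
               - (\<Sum>a\<in>UNIV. S a i * G a k j + snd z $ a * D a k j i)))"
        by (simp add: dEhs)
      have A4: "(\<Sum>i\<in>UNIV. \<Sum>j\<in>UNIV. vX $ i * y1 $ j * G i k j)
          = (\<Sum>i\<in>UNIV. \<Sum>j\<in>UNIV. (x2 $ i - (\<Sum>l\<in>UNIV. x1 $ l * S i l)) * y1 $ j * G i k j)"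
        by (simp add: vXs)
      have A5: "(\<Sum>a\<in>UNIV. \<Sum>i\<in>UNIV. vY $ a * G a i k * x1 $ i) = (\<Sum>i\<in>UNIV. \<Sum>j\<in>UNIV. x1 $ i * vY $ j * G j i k)"
        by (subst sum.swap) (simp add: algebra_simps)
      note M = alg_main[where G=G and D=D and u="\<lambda>i. x1 $ i" and w="\<lambda>i. y1 $ i" and S=S and k=k
          and q="\<lambda>i. x2 $ i" and p="\<lambda>i. snd z $ i"]
      show "snd (svk Gam LC X Y z) $ k = snd (conn HL X Y z) $ k"
        unfolding sndL sndR using A1 A2 A3 A4 A5 M by linarith
    qed
  qed
qed

end
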